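(* Let $G$ and $H$ be connected graphs, each with at least two vertices. Then $$\rho_o(G\square H)\geq \max\{\rho(G)\rho_o(H),\ \rho(H)\rho_o(G),\ \eta_H\rho_o(G)+\eta_G^H,\ \eta_G\rho_o(H)+\eta_H^G\},$$ where $\eta_G=\lceil(\mathrm{diam}(G)+1)/3\rceil$ and $\eta_G^H=1$ if $G\neq K_2$ and $\mathrm{diam}(H)\equiv 2 \pmod 3$, and $\eta_G^H=0$ otherwise (and symmetrically for $\eta_H$, $\eta_H^G$).
   Context: All graphs are finite and simple. A set $P\subseteq V(G)$ is a packing of $G$ if $N[u]\cap N[v]=\emptyset$ for all distinct $u,v\in P$ ($N[u]$ the closed neighborhood); $\rho(G)$ is the maximum size of a packing. A set $P$ is an open packing if the open neighborhoods $N(u)$, $u\in P$, are pairwise disjoint; $\rho_o(G)$ is the maximum size of an open packing. $\mathrm{diam}(G)$ is the diameter. The Cartesian product $G\square H$ has vertex set $V(G)\times V(H)$, with $(g,h)$ adjacent to $(g',h')$ iff ($gg'\in E(G)$ and $h=h'$) or ($g=g'$ and $hh'\in E(H)$). *)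

theory Defs
  imports Complex_Main
begin

definition simple_graph :: "'a set \<Rightarrow> ('a \<Rightarrow> 'a \<Rightarrow> bool) \<Rightarrow> bool" where
  "simple_graph V E \<longleftrightarrow> finite V \<and> (\<forall>u v. E u v \<longrightarrow> u \<in> V \<and> v \<in> V)
     \<and> (\<forall>u v. E u v \<longrightarrow> E v u) \<and> (\<forall>u. \<not> E u u)"

definition nbhd :: "'a set \<Rightarrow> ('a \<Rightarrow> 'a \<Rightarrow> bool) \<Rightarrow> 'a \<Rightarrow> 'a set" where
  "nbhd V E v = {u \<in> V. E v u}"

definition cnbhd :: "'a set \<Rightarrow> ('a \<Rightarrow> 'a \<Rightarrow> bool) \<Rightarrow> 'a \<Rightarrow> 'a set" where
  "cnbhd V E v = insert v (nbhd V E v)"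

definition packing :: "'a set \<Rightarrow> ('a \<Rightarrow> 'a \<Rightarrow> bool) \<Rightarrow> 'a set \<Rightarrow> bool" where
  "packing V E P \<longleftrightarrow> P \<subseteq> V \<and>
     (\<forall>u\<in>P. \<forall>v\<in>P. u \<noteq> v \<longrightarrow> cnbhd V E u \<inter> cnbhd V E v = {})"

definition open_packing :: "'a set \<Rightarrow> ('a \<Rightarrow> 'a \<Rightarrow> bool) \<Rightarrow> 'a set \<Rightarrow> bool" where
  "open_packing V E P \<longleftrightarrow> P \<subseteq> V \<and>
     (\<forall>u\<in>P. \<forall>v\<in>P. u \<noteq> v \<longrightarrow> nbhd V E u \<inter> nbhd V E v = {})"

definition packing_number :: "'a set \<Rightarrow> ('a \<Rightarrow> 'a \<Rightarrow> bool) \<Rightarrow> nat" where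
  "packing_number V E = Max (card ` {P. packing V E P})"

definition open_packing_number :: "'a set \<Rightarrow> ('a \<Rightarrow> 'a \<Rightarrow> bool) \<Rightarrow> nat" where
  "open_packing_number V E = Max (card ` {P. open_packing V E P})"

fun walk_len :: "('a \<Rightarrow> 'a \<Rightarrow> bool) \<Rightarrow> 'a \<Rightarrow> 'a \<Rightarrow> nat \<Rightarrow> bool" where
  "walk_len E u v 0 = (u = v)"
| "walk_len E u v (Suc n) = (\<exists>w. E u w \<and> walk_len E w v n)"

definition gdist :: "('a \<Rightarrow> 'a \<Rightarrow> bool) \<Rightarrow> 'a \<Rightarrow> 'a \<Rightarrow> nat" where
  "gdist E u v = (LEAST n. walk_len E u v n)"

definition connected_graph :: "'a set \<Rightarrow> ('a \<Rightarrow> 'a \<Rightarrow> bool) \<Rightarrow> bool" where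
  "connected_graph V E \<longleftrightarrow> simple_graph V E \<and> V \<noteq> {} \<and>
     (\<forall>u\<in>V. \<forall>v\<in>V. \<exists>n. walk_len E u v n)"

definition diam :: "'a set \<Rightarrow> ('a \<Rightarrow> 'a \<Rightarrow> bool) \<Rightarrow> nat" where
  "diam V E = Max {gdist E u v | u v. u \<in> V \<and> v \<in> V}"

definition is_K2 :: "'a set \<Rightarrow> ('a \<Rightarrow> 'a \<Rightarrow> bool) \<Rightarrow> bool" where
  "is_K2 V E \<longleftrightarrow> card V = 2 \<and> (\<forall>u\<in>V. \<forall>v\<in>V. u \<noteq> v \<longrightarrow> E u v)"

definition cart_edge :: "('a \<Rightarrow> 'a \<Rightarrow> bool) \<Rightarrow> ('b \<Rightarrow> 'b \<Rightarrow> bool)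
    \<Rightarrow> ('a \<times> 'b) \<Rightarrow> ('a \<times> 'b) \<Rightarrow> bool" where
  "cart_edge EG EH x y \<longleftrightarrow>
     (EG (fst x) (fst y) \<and> snd x = snd y) \<or> (fst x = fst y \<and> EH (snd x) (snd y))"

definition eta :: "'a set \<Rightarrow> ('a \<Rightarrow> 'a \<Rightarrow> bool) \<Rightarrow> nat" where
  "eta V E = nat \<lceil>(real (diam V E) + 1) / 3\<rceil>"

definition eta_sup :: "'a set \<Rightarrow> ('a \<Rightarrow> 'a \<Rightarrow> bool) \<Rightarrow> 'b set \<Rightarrow> ('b \<Rightarrow> 'b \<Rightarrow> bool) \<Rightarrow> nat" where
  "eta_sup VG EG VH EH = (if \<not> is_K2 VG EG \<and> diam VH EH mod 3 = 2 then 1 else 0)"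

end

theory Submission
  imports Defs
begin


lemma packing_fin: "finite V \<Longrightarrow> finite {P. packing V E P}"
  unfolding packing_def by (rule finite_subset[of _ "Pow V"]) auto

lemma open_packing_fin: "finite V \<Longrightarrow> finite {P. open_packing V E P}"
  unfolding open_packing_def by (rule finite_subset[of _ "Pow V"]) auto

lemma packing_max_ex:
  assumes "finite V" shows "\<exists>P. packing V E P \<and> card P = packing_number V E"
proof -
  have "packing V E {}" by (simp add: packing_def)
  hence ne: "card ` {P. packing V E P} \<noteq> {}" by auto
  have fin: "finite (card ` {P. packing V E P})" using packing_fin[OF assms] by simp
  show ?thesis unfolding packing_number_def using Max_in[OF fin ne] by auto
qed

lemma open_packing_max_ex:
  assumes "finite V" shows "\<exists>P. open_packing V E P \<and> card P = open_packing_number V E"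
proof -
  have "open_packing V E {}" by (simp add: open_packing_def)
  hence ne: "card ` {P. open_packing V E P} \<noteq> {}" by auto
  have fin: "finite (card ` {P. open_packing V E P})" using open_packing_fin[OF assms] by simp
  show ?thesis unfolding open_packing_number_def using Max_in[OF fin ne] by auto
qed

lemma open_packing_le:
  assumes "finite V" "open_packing V E P" shows "card P \<le> open_packing_number V E"
  unfolding open_packing_number_def
  by (rule Max_ge) (use open_packing_fin[OF assms(1)] assms(2) in auto)

lemma prod_packing:
  assumes sG: "simple_graph VG EG" and P: "packing VG EG P" and X: "open_packing VH EH X"
  shows "open_packing (VG \<times> VH) (cart_edge EG EH) (P \<times> X)"
  unfolding open_packing_def
proof (intro conjI ballI impI)
  show "P \<times> X \<subseteq> VG \<times> VH" using P X by (auto simp: packing_def open_packing_def)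
next
  fix x y assume x: "x \<in> P \<times> X" and y: "y \<in> P \<times> X" and xy: "x \<noteq> y"
  obtain g1 h1 where xe: "x = (g1,h1)" by (cases x)
  obtain g2 h2 where ye: "y = (g2,h2)" by (cases y)
  have g1: "g1 \<in> P" "h1 \<in> X" and g2: "g2 \<in> P" "h2 \<in> X" using x y xe ye by auto
  have PV: "P \<subseteq> VG" using P by (simp add: packing_def)
  have Pd: "\<And>p q. p \<in> P \<Longrightarrow> q \<in> P \<Longrightarrow> p \<noteq> q \<Longrightarrow> cnbhd VG EG p \<inter> cnbhd VG EG q = {}"
    using P by (simp add: packing_def)
  have Xd: "\<And>p q. p \<in> X \<Longrightarrow> q \<in> X \<Longrightarrow> p \<noteq> q \<Longrightarrow> nbhd VH EH p \<inter> nbhd VH EH q = {}"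
    using X by (simp add: open_packing_def)
  have sg: "\<And>p q. EG p q \<Longrightarrow> p \<in> VG \<and> q \<in> VG" "\<And>p. \<not> EG p p" "\<And>p q. EG p q \<Longrightarrow> EG q p"
    using sG by (auto simp: simple_graph_def)
  show "nbhd (VG \<times> VH) (cart_edge EG EH) x \<inter> nbhd (VG \<times> VH) (cart_edge EG EH) y = {}"
  proof (rule ccontr)
    assume "nbhd (VG \<times> VH) (cart_edge EG EH) x \<inter> nbhd (VG \<times> VH) (cart_edge EG EH) y \<noteq> {}"
    then obtain a b where ab: "a \<in> VG" "b \<in> VH" "cart_edge EG EH (g1,h1) (a,b)" "cart_edge EG EH (g2,h2) (a,b)"
      by (auto simp: nbhd_def xe ye)
    then consider (GG) "EG g1 a" "h1 = b" "EG g2 a" "h2 = b" | (HH) "g1=a" "EH h1 b" "g2=a" "EH h2 b"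
      | (GH) "EG g1 a" "h1=b" "g2=a" "EH h2 b" | (HG) "g1=a" "EH h1 b" "EG g2 a" "h2=b"
      by (auto simp: cart_edge_def)
    then show False
    proof cases
      case GG
      hence "g1 \<noteq> g2" using xy xe ye by auto
      moreover have "a \<in> cnbhd VG EG g1 \<inter> cnbhd VG EG g2" using GG ab by (auto simp: cnbhd_def nbhd_def)
      ultimately show False using Pd g1 g2 by blast
    next
      case HH
      hence "h1 \<noteq> h2" using xy xe ye by auto
      moreover have "b \<in> nbhd VH EH h1 \<inter> nbhd VH EH h2" using HH ab by (auto simp: nbhd_def)
      ultimately show False using Xd g1 g2 by blast
    next
      case GH
      hence "g1 \<noteq> g2" using sg(2) by auto
      moreover have "g2 \<in> cnbhd VG EG g1 \<inter> cnbhd VG EG g2" using GH ab by (auto simp: cnbhd_def nbhd_def)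
      ultimately show False using Pd g1 g2 by blast
    next
      case HG
      hence "g1 \<noteq> g2" using sg(2) by auto
      moreover have "g1 \<in> cnbhd VG EG g1 \<inter> cnbhd VG EG g2" using HG ab by (auto simp: cnbhd_def nbhd_def)
      ultimately show False using Pd g1 g2 by blast
    qed
  qed
qed

lemma nbhd_swap:
  "nbhd (VG \<times> VH) (cart_edge EG EH) (prod.swap p) = prod.swap ` nbhd (VH \<times> VG) (cart_edge EH EG) p"
proof (cases p)
  case (Pair a b)
  show ?thesis
  proof (rule set_eqI)
    fix z :: "'a \<times> 'b"
    obtain c d where z: "z = (c,d)" by (cases z)
    have "z \<in> prod.swap ` nbhd (VH \<times> VG) (cart_edge EH EG) p \<longleftrightarrow> (d,c) \<in> nbhd (VH \<times> VG) (cart_edge EH EG) p"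
      using z by force
    thus "z \<in> nbhd (VG \<times> VH) (cart_edge EG EH) (prod.swap p) \<longleftrightarrow> z \<in> prod.swap ` nbhd (VH \<times> VG) (cart_edge EH EG) p"
      using z Pair by (auto simp: nbhd_def cart_edge_def)
  qed
qed
lemma swap_open_packing:
  assumes "open_packing (VH \<times> VG) (cart_edge EH EG) Q"
  shows "open_packing (VG \<times> VH) (cart_edge EG EH) (prod.swap ` Q)"
  unfolding open_packing_def
proof (intro conjI ballI impI)
  show "prod.swap ` Q \<subseteq> VG \<times> VH" using assms by (auto simp: open_packing_def)
next
  fix x y assume "x \<in> prod.swap ` Q" "y \<in> prod.swap ` Q" "x \<noteq> y"
  then obtain x' y' where "x' \<in> Q" "y' \<in> Q" "x = prod.swap x'" "y = prod.swap y'" "x' \<noteq> y'" by auto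
  note c = this
  show "nbhd (VG \<times> VH) (cart_edge EG EH) x \<inter> nbhd (VG \<times> VH) (cart_edge EG EH) y = {}"
  proof -
    have "nbhd (VG \<times> VH) (cart_edge EG EH) x \<inter> nbhd (VG \<times> VH) (cart_edge EG EH) y
      = prod.swap ` (nbhd (VH \<times> VG) (cart_edge EH EG) x' \<inter> nbhd (VH \<times> VG) (cart_edge EH EG) y')"
      using c by (simp add: nbhd_swap image_Int)
    moreover have "nbhd (VH \<times> VG) (cart_edge EH EG) x' \<inter> nbhd (VH \<times> VG) (cart_edge EH EG) y' = {}"
      using assms c unfolding open_packing_def by blast
    ultimately show ?thesis by simp
  qed
qed

lemma opn_swap:
  assumes "finite VG" "finite VH"
  shows "open_packing_number (VH \<times> VG) (cart_edge EH EG) \<le> open_packing_number (VG \<times> VH) (cart_edge EG EH)"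
proof -
  obtain Q where Q: "open_packing (VH \<times> VG) (cart_edge EH EG) Q" "card Q = open_packing_number (VH \<times> VG) (cart_edge EH EG)"
    using open_packing_max_ex[of "VH \<times> VG" "cart_edge EH EG"] assms by auto
  have "inj prod.swap" by simp
  hence c: "card (prod.swap ` Q) = card Q" by (meson card_image inj_on_subset subset_UNIV)
  have f: "finite (VG \<times> VH)" using assms by simp
  have "card (prod.swap ` Q) \<le> open_packing_number (VG \<times> VH) (cart_edge EG EH)"
    by (rule open_packing_le[OF f swap_open_packing[OF Q(1)]])
  thus ?thesis using c Q(2) by linarith
qed



lemma walk_append: "walk_len E u v m \<Longrightarrow> walk_len E v w n \<Longrightarrow> walk_len E u w (m+n)"
  by (induction m arbitrary: u) auto

lemma walk_split: "walk_len E u v n \<Longrightarrow> k \<le> n \<Longrightarrow> \<exists>w. walk_len E u w k \<and> walk_len E w v (n-k)"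
proof (induction k arbitrary: u n)
  case 0 thus ?case by auto
next
  case (Suc k)
  then obtain n' where n: "n = Suc n'" by (cases n) auto
  with Suc.prems obtain z where z: "E u z" "walk_len E z v n'" by auto
  with Suc.IH[of z n'] Suc.prems n obtain w where "walk_len E z w k" "walk_len E w v (n'-k)" by auto
  thus ?case using z n by auto
qed

lemma walk_in: "simple_graph V E \<Longrightarrow> u \<in> V \<Longrightarrow> walk_len E u v n \<Longrightarrow> v \<in> V"
proof (induction n arbitrary: u)
  case 0 thus ?case by simp
next
  case (Suc n)
  then obtain z where "E u z" "walk_len E z v n" by auto
  moreover have "z \<in> V" using Suc.prems(1) calculation(1) by (simp add: simple_graph_def)
  ultimately show ?case using Suc.IH Suc.prems(1) by blast
qed

lemma gdist_walk: "connected_graph V E \<Longrightarrow> u\<in>V \<Longrightarrow> v\<in>V \<Longrightarrow> walk_len E u v (gdist E u v)"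
  unfolding gdist_def connected_graph_def by (meson LeastI_ex)

lemma gdist_le: "walk_len E u v n \<Longrightarrow> gdist E u v \<le> n"
  unfolding gdist_def by (rule Least_le)

lemma gdist_tri: "connected_graph V E \<Longrightarrow> u\<in>V \<Longrightarrow> a\<in>V \<Longrightarrow> walk_len E a b n \<Longrightarrow> gdist E u b \<le> gdist E u a + n"
  by (meson gdist_le gdist_walk walk_append)

lemma diam_ex:
  assumes "connected_graph V E" shows "\<exists>u\<in>V. \<exists>v\<in>V. gdist E u v = diam V E"
proof -
  have fin: "finite V" "V \<noteq> {}" using assms by (auto simp: connected_graph_def simple_graph_def)
  have eq: "{gdist E u v | u v. u \<in> V \<and> v \<in> V} = (\<lambda>(u,v). gdist E u v) ` (V \<times> V)" by auto
  have "finite {gdist E u v | u v. u \<in> V \<and> v \<in> V}" unfolding eq using fin by simp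
  moreover have "{gdist E u v | u v. u \<in> V \<and> v \<in> V} \<noteq> {}" using fin by auto
  ultimately have "diam V E \<in> {gdist E u v | u v. u \<in> V \<and> v \<in> V}" unfolding diam_def by (rule Max_in)
  thus ?thesis by (smt (verit) mem_Collect_eq)
qed

lemma layers:
  assumes c: "connected_graph V E" and uv: "u\<in>V" "v\<in>V" and k: "k \<le> gdist E u v"
  shows "\<exists>w\<in>V. gdist E u w = k"
proof -
  let ?d = "gdist E u v"
  have "walk_len E u v ?d" by (rule gdist_walk[OF c uv])
  from walk_split[OF this k] obtain w where w1: "walk_len E u w k" and w2: "walk_len E w v (?d - k)" by blast
  have wV: "w \<in> V" using walk_in[OF _ uv(1) w1] c by (simp add: connected_graph_def)
  have "gdist E u w \<le> k" by (rule gdist_le[OF w1])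
  moreover have "?d \<le> gdist E u w + (?d - k)" using gdist_tri[OF c uv(1) wV w2] .
  ultimately show ?thesis using wV k by force
qed

lemma full_open_packing_K2:
  assumes c: "connected_graph V E" and card: "card V \<ge> 2" and op: "open_packing V E V"
  shows "is_K2 V E"
proof -
  have sg: "simple_graph V E" and ne: "V \<noteq> {}" and reach: "\<forall>u\<in>V. \<forall>v\<in>V. \<exists>n. walk_len E u v n"
    using c by (auto simp: connected_graph_def)
  have inV: "\<And>p q. E p q \<Longrightarrow> p \<in> V \<and> q \<in> V" and irr: "\<And>p. \<not> E p p" and sym: "\<And>p q. E p q \<Longrightarrow> E q p"
    using sg by (auto simp: simple_graph_def)
  have fin: "finite V" using sg by (simp add: simple_graph_def)
  have uniq: "a = b" if "E x a" "E x b" for x a b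
  proof (rule ccontr)
    assume ab: "a \<noteq> b"
    have "x \<in> nbhd V E a \<inter> nbhd V E b" using that inV sym by (auto simp: nbhd_def)
    moreover have "a \<in> V" "b \<in> V" using that inV by auto
    ultimately show False using op ab unfolding open_packing_def by blast
  qed
  obtain u where u: "u \<in> V" using ne by auto
  have "\<not> V \<subseteq> {u}"
  proof
    assume "V \<subseteq> {u}"
    hence "card V \<le> card {u}" by (rule card_mono[rotated]) simp
    thus False using card by simp
  qed
  then obtain v where v: "v \<in> V" "v \<noteq> u" by auto
  obtain n where "walk_len E u v n" using reach u v by blast
  with v obtain w where uw: "E u w" by (cases n) auto
  have claim: "\<forall>x\<in>{u,w}. walk_len E x y n \<longrightarrow> y \<in> {u,w}" for y n
  proof (induction n)
    case 0 thus ?case by auto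
  next
    case (Suc n)
    show ?case
    proof (intro ballI impI)
      fix x assume x: "x \<in> {u,w}" and wk: "walk_len E x y (Suc n)"
      then obtain z where z: "E x z" "walk_len E z y n" by auto
      have "z \<in> {u,w}"
      proof (cases "x = u")
        case True thus ?thesis using uniq[OF uw] z by auto
      next
        case False
        hence "x = w" using x by auto
        thus ?thesis using uniq[OF sym[OF uw]] z by auto
      qed
      thus "y \<in> {u,w}" using Suc.IH z by blast
    qed
  qed
  have "V \<subseteq> {u,w}"
  proof
    fix y assume "y \<in> V"
    then obtain n where "walk_len E u y n" using reach u by blast
    thus "y \<in> {u,w}" using claim by blast
  qed
  moreover have "{u,w} \<subseteq> V" using u inV uw by auto
  ultimately have V: "V = {u,w}" by blast
  have "u \<noteq> w" using uw irr by auto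
  hence "card V = 2" using V by simp
  thus ?thesis unfolding is_K2_def using V uw sym by auto
qed



lemma eta_eq: "eta V E = diam V E div 3 + 1"
proof -
  define d where "d = diam V E"
  have "d = 3*(d div 3) + d mod 3" by simp
  hence r: "real d = 3 * real (d div 3) + real (d mod 3)" by (metis of_nat_add of_nat_mult of_nat_numeral)
  have m: "real (d mod 3) \<le> 2" by simp
  have "\<lceil>(real d + 1) / 3\<rceil> = int (d div 3 + 1)"
    by (rule ceiling_unique) (use r m in auto)
  thus ?thesis unfolding eta_def d_def by simp
qed

lemma layer_open_packing:
  assumes sG: "simple_graph VG EG" and sH: "simple_graph VH EH"
  and X: "open_packing VG EG X" and W: "W \<subseteq> VH"
  and sep: "\<And>a b. a \<in> W \<Longrightarrow> b \<in> W \<Longrightarrow> a \<noteq> b \<Longrightarrow> \<not> EH a b \<and> (\<forall>c. \<not> (EH a c \<and> EH b c))"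
  shows "open_packing (VG \<times> VH) (cart_edge EG EH) (X \<times> W)"
  unfolding open_packing_def
proof (intro conjI ballI impI)
  show "X \<times> W \<subseteq> VG \<times> VH" using X W by (auto simp: open_packing_def)
next
  fix x y assume x: "x \<in> X \<times> W" and y: "y \<in> X \<times> W" and xy: "x \<noteq> y"
  obtain g1 h1 where xe: "x = (g1,h1)" by (cases x)
  obtain g2 h2 where ye: "y = (g2,h2)" by (cases y)
  have g1: "g1 \<in> X" "h1 \<in> W" and g2: "g2 \<in> X" "h2 \<in> W" using x y xe ye by auto
  have Xd: "\<And>p q. p \<in> X \<Longrightarrow> q \<in> X \<Longrightarrow> p \<noteq> q \<Longrightarrow> nbhd VG EG p \<inter> nbhd VG EG q = {}"
    using X by (simp add: open_packing_def)
  have sh: "\<And>p. \<not> EH p p"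
    using sH by (auto simp: simple_graph_def)
  show "nbhd (VG \<times> VH) (cart_edge EG EH) x \<inter> nbhd (VG \<times> VH) (cart_edge EG EH) y = {}"
  proof (rule ccontr)
    assume "nbhd (VG \<times> VH) (cart_edge EG EH) x \<inter> nbhd (VG \<times> VH) (cart_edge EG EH) y \<noteq> {}"
    then obtain a b where ab: "a \<in> VG" "b \<in> VH" "cart_edge EG EH (g1,h1) (a,b)" "cart_edge EG EH (g2,h2) (a,b)"
      by (auto simp: nbhd_def xe ye)
    then consider (GG) "EG g1 a" "h1 = b" "EG g2 a" "h2 = b" | (HH) "g1=a" "EH h1 b" "g2=a" "EH h2 b"
      | (GH) "EG g1 a" "h1=b" "g2=a" "EH h2 b" | (HG) "g1=a" "EH h1 b" "EG g2 a" "h2=b"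
      by (auto simp: cart_edge_def)
    then show False
    proof cases
      case GG
      hence "g1 \<noteq> g2" using xy xe ye by auto
      moreover have "a \<in> nbhd VG EG g1 \<inter> nbhd VG EG g2" using GG ab by (auto simp: nbhd_def)
      ultimately show False using Xd g1 g2 by blast
    next
      case HH
      hence "h1 \<noteq> h2" using xy xe ye by auto
      thus False using sep[OF g1(2) g2(2)] HH by blast
    next
      case GH
      hence "h1 \<noteq> h2" using sh by auto
      thus False using sep[OF g2(2) g1(2)] GH by blast
    next
      case HG
      hence "h1 \<noteq> h2" using sh by auto
      thus False using sep[OF g1(2) g2(2)] HG by blast
    qed
  qed
qed

lemma add_point:
  assumes sG: "simple_graph VG EG" and sH: "simple_graph VH EH"
  and op: "open_packing (VG \<times> VH) (cart_edge EG EH) (X \<times> W)"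
  and gs: "gs \<in> VG" "gs \<notin> X" and v: "v \<in> VH"
  and Wv: "\<And>w. w \<in> W \<Longrightarrow> \<not> EH w v \<and> w \<noteq> v"
  shows "open_packing (VG \<times> VH) (cart_edge EG EH) (insert (gs,v) (X \<times> W))"
proof -
  have sym: "\<And>p q. EH p q \<Longrightarrow> EH q p" using sH by (auto simp: simple_graph_def)
  have key: "nbhd (VG \<times> VH) (cart_edge EG EH) (gs,v) \<inter> nbhd (VG \<times> VH) (cart_edge EG EH) (g,w) = {}"
    if gw: "g \<in> X" "w \<in> W" for g w
  proof (rule ccontr)
    assume "nbhd (VG \<times> VH) (cart_edge EG EH) (gs,v) \<inter> nbhd (VG \<times> VH) (cart_edge EG EH) (g,w) \<noteq> {}"
    then obtain a b where ab: "cart_edge EG EH (gs,v) (a,b)" "cart_edge EG EH (g,w) (a,b)"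
      by (auto simp: nbhd_def)
    then consider (GG) "EG gs a" "v = b" "EG g a" "w = b" | (HH) "gs=a" "EH v b" "g=a" "EH w b"
      | (GH) "EG gs a" "v=b" "g=a" "EH w b" | (HG) "gs=a" "EH v b" "EG g a" "w=b"
      by (auto simp: cart_edge_def)
    then show False
    proof cases
      case GG thus False using Wv[OF gw(2)] by auto
    next
      case HH thus False using gs gw by auto
    next
      case GH thus False using Wv[OF gw(2)] by auto
    next
      case HG thus False using Wv[OF gw(2)] sym by auto
    qed
  qed
  show ?thesis
    unfolding open_packing_def
  proof (intro conjI ballI impI)
    show "insert (gs, v) (X \<times> W) \<subseteq> VG \<times> VH" using op gs v by (auto simp: open_packing_def)
  next
    fix x y assume x: "x \<in> insert (gs, v) (X \<times> W)" and y: "y \<in> insert (gs, v) (X \<times> W)" and xy: "x \<noteq> y"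
    show "nbhd (VG \<times> VH) (cart_edge EG EH) x \<inter> nbhd (VG \<times> VH) (cart_edge EG EH) y = {}"
    proof (cases "x = (gs,v)")
      case True
      with xy y obtain g w where "y = (g,w)" "g \<in> X" "w \<in> W" by auto
      thus ?thesis using key True by simp
    next
      case F: False
      show ?thesis
      proof (cases "y = (gs,v)")
        case True
        with F x obtain g w where "x = (g,w)" "g \<in> X" "w \<in> W" by auto
        thus ?thesis using key True by (simp add: Int_commute)
      next
        case False
        with F x y have "x \<in> X \<times> W" "y \<in> X \<times> W" by auto
        thus ?thesis using op xy unfolding open_packing_def by blast
      qed
    qed
  qed
qed



lemma part3:
  fixes VG :: "'a set" and VH :: "'b set"
  assumes cG: "connected_graph VG EG" and cardG: "card VG \<ge> 2"
    and cH: "connected_graph VH EH"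
  shows "eta VH EH * open_packing_number VG EG + eta_sup VG EG VH EH
          \<le> open_packing_number (VG \<times> VH) (cart_edge EG EH)"
proof -
  have sG: "simple_graph VG EG" and sH: "simple_graph VH EH" using cG cH by (auto simp: connected_graph_def)
  have finG: "finite VG" and finH: "finite VH" using sG sH by (auto simp: simple_graph_def)
  have fin: "finite (VG \<times> VH)" using finG finH by simp
  have symH: "\<And>p q. EH p q \<Longrightarrow> EH q p" using sH by (auto simp: simple_graph_def)
  obtain X where X: "open_packing VG EG X" "card X = open_packing_number VG EG"
    using open_packing_max_ex[OF finG] by blast
  obtain u v where uv: "u \<in> VH" "v \<in> VH" "gdist EH u v = diam VH EH"
    using diam_ex[OF cH] by blast
  define d where "d = diam VH EH"
  define wf where "wf k = (SOME w. w \<in> VH \<and> gdist EH u w = k)" for k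
  have wf: "wf k \<in> VH \<and> gdist EH u (wf k) = k" if "k \<le> d" for k
  proof -
    have "\<exists>w. w \<in> VH \<and> gdist EH u w = k" using layers[OF cH uv(1,2)] that uv(3) d_def by auto
    thus ?thesis unfolding wf_def by (rule someI_ex)
  qed
  define W where "W = (\<lambda>k. wf (3*k)) ` {..< d div 3 + 1}"
  have Wd: "a \<in> VH \<and> 3 dvd gdist EH u a \<and> gdist EH u a \<le> 3 * (d div 3)" if aW: "a \<in> W" for a
  proof -
    obtain k where k: "k < d div 3 + 1" "a = wf (3*k)" using aW W_def by auto
    hence "3*k \<le> d" by linarith
    thus ?thesis using wf[of "3*k"] k by auto
  qed
  have Winj: "inj_on (\<lambda>k. wf (3*k)) {..< d div 3 + 1}"
  proof (rule inj_onI)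
    fix i j assume i: "i \<in> {..< d div 3 + 1}" and j: "j \<in> {..< d div 3 + 1}" and e: "wf (3*i) = wf (3*j)"
    have i3: "3*i \<le> d" and j3: "3*j \<le> d" using i j by auto
    have "gdist EH u (wf (3*i)) = 3*i" using wf[OF i3] by blast
    moreover have "gdist EH u (wf (3*j)) = 3*j" using wf[OF j3] by blast
    ultimately have "3*i = 3*j" using e by metis
    thus "i = j" by simp
  qed
  have cardW: "card W = eta VH EH"
  proof -
    have "card W = card {..< d div 3 + 1}" unfolding W_def by (rule card_image[OF Winj])
    also have "\<dots> = d div 3 + 1" by simp
    finally show ?thesis unfolding eta_eq d_def .
  qed
  have WV: "W \<subseteq> VH" using Wd by auto
  have Wgeq: "a = b" if ab: "a \<in> W" "b \<in> W" "gdist EH u a = gdist EH u b" for a b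
  proof -
    obtain i where i: "i < d div 3 + 1" "a = wf (3*i)" using ab W_def by auto
    obtain j where j: "j < d div 3 + 1" "b = wf (3*j)" using ab W_def by auto
    have i3: "3*i \<le> d" and j3: "3*j \<le> d" using i j by linarith+
    have "gdist EH u a = 3*i" using wf[OF i3] i(2) by blast
    moreover have "gdist EH u b = 3*j" using wf[OF j3] j(2) by blast
    ultimately have "i = j" using ab(3) by linarith
    thus ?thesis using i(2) j(2) by simp
  qed
  have sep: "\<not> EH a b \<and> (\<forall>c. \<not> (EH a c \<and> EH b c))" if ab: "a \<in> W" "b \<in> W" "a \<noteq> b" for a b
  proof -
    have aV: "a \<in> VH" and bV: "b \<in> VH" using ab Wd by auto
    have ne: "gdist EH u a \<noteq> gdist EH u b" using Wgeq ab by blast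
    have d3: "3 dvd gdist EH u a" "3 dvd gdist EH u b" using Wd ab by auto
    have far: False if "gdist EH u b \<le> gdist EH u a + 2" "gdist EH u a \<le> gdist EH u b + 2"
    proof -
      obtain i j where ij: "gdist EH u a = 3*i" "gdist EH u b = 3*j" using d3 by (meson dvdE)
      hence "i \<noteq> j" using ne by auto
      hence "i + 1 \<le> j \<or> j + 1 \<le> i" by linarith
      thus False using that ij by linarith
    qed
    show ?thesis
    proof (intro conjI allI notI)
      assume e: "EH a b"
      have "walk_len EH a b 1" using e by simp
      moreover have "walk_len EH b a 1" using symH[OF e] by simp
      ultimately show False using gdist_tri[OF cH uv(1) aV, of b 1] gdist_tri[OF cH uv(1) bV, of a 1] far by linarith
    next
      fix c assume e: "EH a c \<and> EH b c"
      have "walk_len EH a b (Suc (Suc 0))" using e symH by auto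
      hence w1: "walk_len EH a b 2" by (simp add: numeral_2_eq_2)
      have "walk_len EH b a (Suc (Suc 0))" using e symH by auto
      hence w2: "walk_len EH b a 2" by (simp add: numeral_2_eq_2)
      show False using gdist_tri[OF cH uv(1) aV w1] gdist_tri[OF cH uv(1) bV w2] far by linarith
    qed
  qed
  have opXW: "open_packing (VG \<times> VH) (cart_edge EG EH) (X \<times> W)"
    by (rule layer_open_packing[OF sG sH X(1) WV sep])
  have cXW: "card (X \<times> W) = eta VH EH * open_packing_number VG EG"
    using X(2) cardW by (simp add: card_cartesian_product)
  show ?thesis
  proof (cases "eta_sup VG EG VH EH = 0")
    case True
    thus ?thesis using open_packing_le[OF fin opXW] cXW by simp
  next
    case False
    hence nK: "\<not> is_K2 VG EG" and dm: "d mod 3 = 2" and es: "eta_sup VG EG VH EH = 1"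
      unfolding eta_sup_def d_def by (auto split: if_splits)
    have XV: "X \<subseteq> VG" using X(1) by (simp add: open_packing_def)
    have "X \<noteq> VG" using full_open_packing_K2[OF cG cardG] X(1) nK by blast
    then obtain gs where gs: "gs \<in> VG" "gs \<notin> X" using XV by blast
    have Wv: "\<not> EH w v \<and> w \<noteq> v" if w: "w \<in> W" for w
    proof -
      have wV: "w \<in> VH" and wl: "gdist EH u w \<le> 3 * (d div 3)" using Wd w by auto
      have dv: "gdist EH u v = d" using uv d_def by simp
      have lt: "3 * (d div 3) + 2 = d" using dm by presburger
      show ?thesis
      proof
        show "\<not> EH w v"
        proof
          assume "EH w v"
          hence "walk_len EH w v 1" by simp
          from gdist_tri[OF cH uv(1) wV this] show False using dv wl lt by linarith
        qed
        show "w \<noteq> v" using dv wl lt by auto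
      qed
    qed
    have opI: "open_packing (VG \<times> VH) (cart_edge EG EH) (insert (gs,v) (X \<times> W))"
      by (rule add_point[OF sG sH opXW gs uv(2) Wv])
    have "(gs,v) \<notin> X \<times> W" using gs by auto
    moreover have "finite (X \<times> W)" using XV WV finG finH by (meson finite_SigmaI finite_subset)
    ultimately have "card (insert (gs,v) (X \<times> W)) = card (X \<times> W) + 1" by simp
    thus ?thesis using open_packing_le[OF fin opI] cXW es by simp
  qed
qed

lemma part1:
  assumes cG: "connected_graph VG EG" and cH: "connected_graph VH EH"
  shows "packing_number VG EG * open_packing_number VH EH \<le> open_packing_number (VG \<times> VH) (cart_edge EG EH)"
proof -
  have sG: "simple_graph VG EG" and sH: "simple_graph VH EH" using cG cH by (auto simp: connected_graph_def)
  have finG: "finite VG" and finH: "finite VH" using sG sH by (auto simp: simple_graph_def)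
  obtain P where P: "packing VG EG P" "card P = packing_number VG EG"
    using packing_max_ex[OF finG] by blast
  obtain X where X: "open_packing VH EH X" "card X = open_packing_number VH EH"
    using open_packing_max_ex[OF finH] by blast
  have "card (P \<times> X) \<le> open_packing_number (VG \<times> VH) (cart_edge EG EH)"
    using open_packing_le[OF _ prod_packing[OF sG P(1) X(1)]] finG finH by simp
  thus ?thesis using P X by (simp add: card_cartesian_product)
qed

theorem theorem4:
  fixes VG :: "'a set" and EG :: "'a \<Rightarrow> 'a \<Rightarrow> bool"
    and VH :: "'b set" and EH :: "'b \<Rightarrow> 'b \<Rightarrow> bool"
  assumes "connected_graph VG EG" and "card VG \<ge> 2"
    and "connected_graph VH EH" and "card VH \<ge> 2"
  shows "open_packing_number (VG \<times> VH) (cart_edge EG EH) \<ge>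
    max (max (packing_number VG EG * open_packing_number VH EH)
             (packing_number VH EH * open_packing_number VG EG))
        (max (eta VH EH * open_packing_number VG EG + eta_sup VG EG VH EH)
             (eta VG EG * open_packing_number VH EH + eta_sup VH EH VG EG))"
proof -
  have fG: "finite VG" "finite VH" using assms(1,3) by (auto simp: connected_graph_def simple_graph_def)
  have sw: "open_packing_number (VH \<times> VG) (cart_edge EH EG) \<le> open_packing_number (VG \<times> VH) (cart_edge EG EH)"
    by (rule opn_swap[OF fG])
  have 1: "packing_number VG EG * open_packing_number VH EH \<le> open_packing_number (VG \<times> VH) (cart_edge EG EH)"
    by (rule part1[OF assms(1,3)])
  have 2: "packing_number VH EH * open_packing_number VG EG \<le> open_packing_number (VG \<times> VH) (cart_edge EG EH)"
    using part1[OF assms(3,1)] sw by linarith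
  have 3: "eta VH EH * open_packing_number VG EG + eta_sup VG EG VH EH \<le> open_packing_number (VG \<times> VH) (cart_edge EG EH)"
    by (rule part3[OF assms(1,2,3)])
  have 4: "eta VG EG * open_packing_number VH EH + eta_sup VH EH VG EG \<le> open_packing_number (VG \<times> VH) (cart_edge EG EH)"
    using part3[OF assms(3,4,1)] sw by linarith
  show ?thesis using 1 2 3 4 by simp
qed


end
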